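(* Let $\mathcal{F},G:\mathbb{R}^p\times\mathbb{R}^q\to\mathbb{R}$ satisfy the standing assumptions (A1) and (A2) with constants $L>0$ and $M<\infty$, and fix $\delta>0$ and $\xi\in(0,1)$. Fix the total number of iterations $T\ge 1$ and constants $c>0$, $C>0$. Suppose the learning rates are constant in $t$, with $\eta_\alpha^{(t)}=\eta_\alpha=\frac{c}{T}$ where $\frac{c}{T}<1$, and $\eta_w^{(t)}=\eta_w=\frac{C}{\sqrt T}$ where $$\frac{C}{\sqrt T}<\min\Big(\frac{1-\xi}{L},\,1\Big).$$ Let $(w^t,\alpha^t)_{t\ge1}$ be generated by the EBOMLC iteration from an arbitrary initial point $(w^1,\alpha^1)$. Then there is a constant $H$ depending only on $M,L,\delta,\xi,c,C$ (and on $\mathcal{F}(w^1,\alpha^1)$), but not on $T$, such that $$\min_{1\le t\le T}\big\|\nabla_w\mathcal{F}(w^t,\alpha^t)\big\|^2\le \frac{H}{\sqrt T}.$$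
   Context: Notation: $\|\cdot\|$ is the Euclidean norm; for a function $\Phi(w,\alpha)$ of $(w,\alpha)\in\mathbb{R}^p\times\mathbb{R}^q$, $\nabla\Phi=(\nabla_w\Phi,\nabla_\alpha\Phi)$ denotes the full gradient in the joint variable. Standing assumptions. (A1) $\mathcal{F}$ and $G$ are differentiable on $\mathbb{R}^p\times\mathbb{R}^q$ and $\nabla\mathcal{F}$, $\nabla G$ are $L$-Lipschitz with respect to the joint variable $(w,\alpha)$, for some $L>0$. (A2) There is a finite $M$ such that for all $(w,\alpha)$: $|\mathcal{F}(w,\alpha)|\le M$, $|G(w,\alpha)|\le M$, $\|\nabla\mathcal{F}(w,\alpha)\|\le M$, $\|\nabla G(w,\alpha)\|\le M$. EBOMLC iteration. Fix constants $\delta>0$, $\xi\in(0,1)$ and positive learning rates $\eta_w^{(t)},\eta_\alpha^{(t)}$. Given $(w^t,\alpha^t)$, set $w^t_{(1)}=w^t-\eta_w^{(t)}\nabla_wG(w^t,\alpha^t)$ and define $\mathcal{Q}_t(w,\alpha)=G(w,\alpha)-G(w^t_{(1)},\alpha)$, where $w^t_{(1)}$ is treated as a constant when differentiating, so that $$\nabla\mathcal{Q}(w^t,\alpha^t):=\nabla G(w^t,\alpha^t)-\nabla G(w^t_{(1)},\alpha^t),$$ with components $\nabla_w\mathcal{Q},\nabla_\alpha\mathcal{Q}$. Define $$\bar\beta_t=\max\Big(\delta-\frac{\nabla_w\mathcal{F}(w^t,\alpha^t)^T\nabla_w\mathcal{Q}(w^t,\alpha^t)}{\|\nabla\mathcal{Q}(w^t,\alpha^t)\|^2},\,0\Big)$$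 if $\nabla\mathcal{Q}(w^t,\alpha^t)\neq0$, and $\bar\beta_t=0$ otherwise. Then update $$w^{t+1}=w^t-\eta_w^{(t)}\big(\nabla_w\mathcal{F}(w^t,\alpha^t)+\xi\bar\beta_t\nabla_w\mathcal{Q}(w^t,\alpha^t)\big),$$ $$\alpha^{t+1}=\alpha^t-\eta_\alpha^{(t)}\big(\nabla_\alpha\mathcal{F}(w^t,\alpha^t)+\xi\bar\beta_t\nabla_\alpha\mathcal{Q}(w^t,\alpha^t)\big).$$ (In the paper $w$ are main-model parameters, $\alpha$ meta-model parameters, $\mathcal{F}$ a mixture upper loss and $G$ a lower loss, but only (A1), (A2) are used.) *)

theory Defs
  imports "HOL-Analysis.Analysis"
begin

text \<open>A gradient field gF of F
  is a function with F having derivative (\<lambda>h. gF z \<bullet> h) at every z;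
  fst (gF z) is the w-component, snd (gF z) the alpha-component.\<close>

definition Qgrad :: "(('p::euclidean_space) \<times> ('q::euclidean_space) \<Rightarrow> 'p \<times> 'q) \<Rightarrow> real \<Rightarrow> 'p \<Rightarrow> 'q \<Rightarrow> 'p \<times> 'q" where
  "Qgrad gG eta_w w a = gG (w, a) - gG (w - eta_w *\<^sub>R fst (gG (w, a)), a)"

definition betabar :: "real \<Rightarrow> (('p::euclidean_space) \<times> ('q::euclidean_space) \<Rightarrow> 'p \<times> 'q)
    \<Rightarrow> ('p \<times> 'q \<Rightarrow> 'p \<times> 'q) \<Rightarrow> real \<Rightarrow> 'p \<Rightarrow> 'q \<Rightarrow> real" where
  "betabar delta gF gG eta_w w a =
     (let q = Qgrad gG eta_w w a in
      if q \<noteq> 0 then max (delta - (fst (gF (w, a)) \<bullet> fst q) / (norm q)\<^sup>2) 0 else 0)"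

definition ebomlc_step :: "real \<Rightarrow> real \<Rightarrow> real \<Rightarrow> real \<Rightarrow> (('p::euclidean_space) \<times> ('q::euclidean_space) \<Rightarrow> 'p \<times> 'q)
    \<Rightarrow> ('p \<times> 'q \<Rightarrow> 'p \<times> 'q) \<Rightarrow> 'p \<Rightarrow> 'q \<Rightarrow> 'p \<times> 'q" where
  "ebomlc_step delta xi eta_w eta_a gF gG w a =
     (let q = Qgrad gG eta_w w a; b = betabar delta gF gG eta_w w a in
      (w - eta_w *\<^sub>R (fst (gF (w, a)) + (xi * b) *\<^sub>R fst q),
       a - eta_a *\<^sub>R (snd (gF (w, a)) + (xi * b) *\<^sub>R snd q)))"

end

theory Submission
  imports Defs
begin

lemma descent:
  fixes F :: "'a::real_inner \<Rightarrow> real"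
  assumes der: "\<forall>z. (F has_derivative (\<lambda>h. gF z \<bullet> h)) (at z)"
    and lip: "\<forall>z z'. norm (gF z - gF z') \<le> L * norm (z - z')"
    and L0: "L \<ge> 0"
  shows "F (z + d) \<le> F z + gF z \<bullet> d + L * (norm d)^2"
proof -
  define f where "f s = F (z + s *\<^sub>R d) - s * (gF z \<bullet> d)" for s :: real
  have dd: "(f has_derivative (\<lambda>h. h * ((gF (z + s *\<^sub>R d) - gF z) \<bullet> d))) (at s)" for s
  proof -
    have l: "((\<lambda>s. z + s *\<^sub>R d) has_derivative (\<lambda>h. h *\<^sub>R d)) (at s)"
      by (auto intro!: derivative_eq_intros)
    have c: "((\<lambda>s. F (z + s *\<^sub>R d)) has_derivative (\<lambda>h. gF (z + s *\<^sub>R d) \<bullet> (h *\<^sub>R d))) (at s)"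
      using has_derivative_compose[OF l der[rule_format, of "z + s *\<^sub>R d"]] by (simp add: o_def)
    have m: "((\<lambda>s. s * (gF z \<bullet> d)) has_derivative (\<lambda>h. h * (gF z \<bullet> d))) (at s)"
      by (auto intro!: derivative_eq_intros)
    show ?thesis unfolding f_def
      using has_derivative_diff[OF c m]
      by (simp add: algebra_simps inner_diff_left)
  qed
  have cont: "continuous_on {0..1} f"
    using dd has_derivative_continuous continuous_at_imp_continuous_on by blast
  obtain s where s: "s \<in> {0<..<1}" and
    n: "norm (f 1 - f 0) \<le> norm ((1 - 0) * ((gF (z + s *\<^sub>R d) - gF z) \<bullet> d))"
    using mvt_general[of 0 1 f, OF _ cont dd] by auto
  have "norm ((gF (z + s *\<^sub>R d) - gF z) \<bullet> d) \<le> norm (gF (z + s *\<^sub>R d) - gF z) * norm d"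
    using Cauchy_Schwarz_ineq2 by simp
  also have "\<dots> \<le> L * norm (s *\<^sub>R d) * norm d"
    using lip[rule_format, of "z + s *\<^sub>R d" z] by (intro mult_right_mono) auto
  also have "\<dots> \<le> L * norm d * norm d"
  proof -
    have "s * norm d \<le> norm d" using s mult_left_le_one_le[of "norm d" s] by auto
    then show ?thesis using s L0 by (auto intro!: mult_right_mono mult_left_mono)
  qed
  finally have "f 1 - f 0 \<le> L * (norm d)^2" using n by (simp add: power2_eq_square)
  then show ?thesis by (simp add: f_def)
qed

lemma step:
  fixes gF gG :: "('p::euclidean_space \<times> 'q::euclidean_space) \<Rightarrow> 'p \<times> 'q"
    and F :: "'p \<times> 'q \<Rightarrow> real"
  assumes der: "\<forall>z. (F has_derivative (\<lambda>h. gF z \<bullet> h)) (at z)"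
    and lipF: "\<forall>z z'. norm (gF z - gF z') \<le> L * norm (z - z')"
    and lipG: "\<forall>z z'. norm (gG z - gG z') \<le> L * norm (z - z')"
    and bd: "\<forall>z. norm (gF z) \<le> M \<and> norm (gG z) \<le> M"
    and L0: "L > 0" and dl: "delta > 0" and xi: "0 < xi" "xi < 1"
    and ew: "0 < ew" "ew < 1" and ea: "0 < ea"
    and st: "(w', a') = ebomlc_step delta xi ew ea gF gG w a"
  shows "F (w', a') \<le> F (w, a) - ew * (1 - xi) * (norm (fst (gF (w, a))))\<^sup>2
          + ew\<^sup>2 * xi * delta * L * M\<^sup>2 + ea * M * (M + (delta * L + 1) * M)
          + L * (ew\<^sup>2 + ea\<^sup>2) * (M + (delta * L + 1) * M)\<^sup>2"
proof -
  define B0 where "B0 = (delta * L + 1) * M"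
  have M0: "M \<ge> 0" using bd norm_ge_zero order_trans by blast
  obtain gw ga where g: "gF (w, a) = (gw, ga)" by fastforce
  obtain qw qa where q: "Qgrad gG ew w a = (qw, qa)" by fastforce
  define b where "b = betabar delta gF gG ew w a"
  define nq where "nq = norm (qw, qa)"
  have gwM: "norm gw \<le> M" using bd norm_fst_le[of gw ga] g by (metis order_trans)
  have gaM: "norm ga \<le> M" using bd norm_snd_le[of ga gw] g by (metis order_trans)
  have qw_le: "norm qw \<le> nq" unfolding nq_def by (rule norm_fst_le)
  have qa_le: "norm qa \<le> nq" unfolding nq_def by (rule norm_snd_le)
  have nq0: "nq \<ge> 0" unfolding nq_def by simp
  have nqL: "nq \<le> L * ew * M"
  proof -
    have "nq = norm (gG (w, a) - gG (w - ew *\<^sub>R fst (gG (w, a)), a))"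
      using q unfolding nq_def Qgrad_def by simp
    also have "\<dots> \<le> L * norm ((w, a) - (w - ew *\<^sub>R fst (gG (w, a)), a))"
      using lipG by blast
    also have "(w, a) - (w - ew *\<^sub>R fst (gG (w, a)), a) = (ew *\<^sub>R fst (gG (w, a)), 0)" by simp
    also have "norm (ew *\<^sub>R fst (gG (w, a)), 0::'q) = ew * norm (fst (gG (w, a)))"
      using ew by (simp add: norm_Pair)
    also have "norm (fst (gG (w, a))) \<le> M"
      using bd norm_fst_le[of "fst (gG (w, a))" "snd (gG (w, a))"] by (metis order_trans prod.collapse)
    finally show ?thesis using L0 ew by (simp add: mult_left_mono)
  qed
  define x where "x = gw \<bullet> qw"
  have xle: "\<bar>x\<bar> \<le> norm gw * nq"
    unfolding x_def using Cauchy_Schwarz_ineq2[of gw qw] qw_le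
    by (meson mult_left_mono norm_ge_zero order_trans)
  have x2: "x\<^sup>2 \<le> (norm gw)\<^sup>2 * nq\<^sup>2"
    using xle by (metis abs_ge_zero power2_abs power_mono power_mult_distrib)
  have b0: "b \<ge> 0" unfolding b_def betabar_def by (simp add: Let_def)
  have bq: "b * nq \<le> delta * nq + norm gw \<and> x * b \<ge> - delta * \<bar>x\<bar> - (norm gw)\<^sup>2"
  proof (cases "nq = 0 \<or> b = 0")
    case True
    then have "b = 0" unfolding nq_def b_def betabar_def using q by (auto simp: Let_def)
    have h1: "delta * \<bar>x\<bar> \<ge> 0" using dl by simp
    have h2: "(norm gw)\<^sup>2 \<ge> 0" by simp
    have h3: "x * b = 0" "b * nq = 0" using \<open>b = 0\<close> by simp_all
    have h4: "delta * nq \<ge> 0" using dl nq0 by simp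
    show ?thesis using h1 h2 h3 h4 norm_ge_zero[of gw] by linarith
  next
    case False
    then have qne: "Qgrad gG ew w a \<noteq> 0" and nqp: "nq > 0" using q nq_def nq0 by auto
    have bdef: "b = delta - x / nq\<^sup>2"
      using False qne q unfolding b_def betabar_def x_def nq_def by (auto simp: Let_def g max_def split: if_splits)
    have "b * nq = delta * nq - x / nq" using nqp by (simp add: bdef field_simps power2_eq_square)
    also have "\<dots> \<le> delta * nq + norm gw"
    proof -
      have "- x / nq \<le> norm gw" using xle nqp by (simp add: field_simps)
      then show ?thesis by simp
    qed
    finally have A: "b * nq \<le> delta * nq + norm gw" .
    have "x * b = delta * x - x\<^sup>2 / nq\<^sup>2" using nqp by (simp add: bdef field_simps power2_eq_square)
    moreover have "x\<^sup>2 / nq\<^sup>2 \<le> (norm gw)\<^sup>2" using x2 nqp by (simp add: field_simps)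
    moreover have "delta * x \<ge> - delta * \<bar>x\<bar>" using dl mult_left_mono[of "- \<bar>x\<bar>" x delta] by simp
    ultimately show ?thesis using A by linarith
  qed
  have bqB: "b * nq \<le> B0"
  proof -
    have e1: "ew * M \<le> M" using ew M0 mult_left_le_one_le[of M ew] by simp
    have e3: "L * (ew * M) \<le> L * M" using mult_left_mono[OF e1] L0 by simp
    have e2: "nq \<le> L * M" using nqL e3 by (metis mult.assoc order_trans)
    have "delta * nq \<le> delta * (L * M)" using e2 dl by (simp add: mult_left_mono)
    then show ?thesis using bq gwM unfolding B0_def by (simp add: algebra_simps)
  qed
  have T3: "gw \<bullet> gw + xi * b * x \<ge> (1 - xi) * (norm gw)\<^sup>2 - ew * xi * delta * L * M\<^sup>2"
  proof -
    have "\<bar>x\<bar> \<le> M * (L * ew * M)"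
      using xle gwM nqL nq0 M0 by (meson mult_mono norm_ge_zero order_trans)
    then have "delta * \<bar>x\<bar> \<le> delta * (M * (L * ew * M))" using dl by (simp add: mult_left_mono)
    then have "x * b \<ge> - ew * delta * L * M\<^sup>2 - (norm gw)\<^sup>2" using bq
      by (simp add: power2_eq_square algebra_simps)
    then have "xi * (x * b) \<ge> xi * (- ew * delta * L * M\<^sup>2 - (norm gw)\<^sup>2)"
      using xi by (simp add: mult_left_mono)
    then show ?thesis by (simp add: power2_norm_eq_inner[symmetric] algebra_simps)
  qed
  have T4: "ga \<bullet> ga + xi * b * (ga \<bullet> qa) \<ge> - (M * B0)"
  proof -
    have "\<bar>ga \<bullet> qa\<bar> \<le> M * nq" using Cauchy_Schwarz_ineq2[of ga qa] gaM qa_le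
      by (meson mult_mono norm_ge_zero order_trans)
    then have "\<bar>b * (ga \<bullet> qa)\<bar> \<le> M * (b * nq)" using b0
      by (metis abs_mult abs_of_nonneg mult.left_commute mult_left_mono)
    also have "\<dots> \<le> M * B0" using bqB M0 by (simp add: mult_left_mono)
    finally have y1: "\<bar>b * (ga \<bullet> qa)\<bar> \<le> M * B0" .
    have y2: "\<bar>xi * (b * (ga \<bullet> qa))\<bar> = xi * \<bar>b * (ga \<bullet> qa)\<bar>" using xi by (simp add: abs_mult)
    have y3: "xi * \<bar>b * (ga \<bullet> qa)\<bar> \<le> \<bar>b * (ga \<bullet> qa)\<bar>"
      using xi mult_left_le_one_le[of "\<bar>b * (ga \<bullet> qa)\<bar>" xi] by simp
    have "\<bar>xi * (b * (ga \<bullet> qa))\<bar> \<le> M * B0" using y1 y2 y3 by linarith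
    then have y4: "- (M * B0) \<le> xi * (b * (ga \<bullet> qa))" by linarith
    have y5: "ga \<bullet> ga \<ge> 0" by simp
    have y6: "xi * b * (ga \<bullet> qa) = xi * (b * (ga \<bullet> qa))" by simp
    show ?thesis using y4 y5 y6 by linarith
  qed
  define u where "u = gw + (xi * b) *\<^sub>R qw"
  define v where "v = ga + (xi * b) *\<^sub>R qa"
  have xibq: "xi * b * nq \<le> B0"
  proof -
    have "xi * (b * nq) \<le> b * nq" using xi b0 nq0 mult_left_le_one_le[of "b * nq" xi] by simp
    then show ?thesis using bqB by (simp add: mult.assoc)
  qed
  have un: "norm u \<le> M + B0"
  proof -
    have "norm u \<le> norm gw + norm ((xi * b) *\<^sub>R qw)" unfolding u_def by (rule norm_triangle_ineq)
    also have "norm ((xi * b) *\<^sub>R qw) \<le> xi * b * nq" using xi b0 qw_le by (simp add: mult_left_mono)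
    finally show ?thesis using gwM xibq by linarith
  qed
  have vn: "norm v \<le> M + B0"
  proof -
    have "norm v \<le> norm ga + norm ((xi * b) *\<^sub>R qa)" unfolding v_def by (rule norm_triangle_ineq)
    also have "norm ((xi * b) *\<^sub>R qa) \<le> xi * b * nq" using xi b0 qa_le by (simp add: mult_left_mono)
    finally show ?thesis using gaM xibq by linarith
  qed
  have wa': "w' = w - ew *\<^sub>R u" "a' = a - ea *\<^sub>R v"
    using st unfolding ebomlc_step_def u_def v_def b_def by (simp_all add: Let_def g q)
  define d where "d = (- (ew *\<^sub>R u), - (ea *\<^sub>R v))"
  have zd: "(w', a') = (w, a) + d" unfolding d_def wa' by simp
  have D: "F (w', a') \<le> F (w, a) + gF (w, a) \<bullet> d + L * (norm d)\<^sup>2"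
    unfolding zd using descent[OF der lipF] L0 by simp
  have gd: "gF (w, a) \<bullet> d = - ew * (gw \<bullet> gw + xi * b * x) - ea * (ga \<bullet> ga + xi * b * (ga \<bullet> qa))"
    unfolding g d_def u_def v_def x_def by (simp add: inner_add_right algebra_simps)
  have nd: "(norm d)\<^sup>2 \<le> (ew\<^sup>2 + ea\<^sup>2) * (M + B0)\<^sup>2"
  proof -
    have "(norm d)\<^sup>2 = ew\<^sup>2 * (norm u)\<^sup>2 + ea\<^sup>2 * (norm v)\<^sup>2"
      unfolding d_def using ew ea by (simp add: norm_Pair power_mult_distrib)
    also have "\<dots> \<le> ew\<^sup>2 * (M + B0)\<^sup>2 + ea\<^sup>2 * (M + B0)\<^sup>2"
      using un vn by (intro add_mono mult_left_mono power_mono) auto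
    finally show ?thesis by (simp add: algebra_simps)
  qed
  have "gF (w, a) \<bullet> d \<le> - ew * ((1 - xi) * (norm gw)\<^sup>2 - ew * xi * delta * L * M\<^sup>2) + ea * (M * B0)"
  proof -
    have "ew * ((1 - xi) * (norm gw)\<^sup>2 - ew * xi * delta * L * M\<^sup>2) \<le> ew * (gw \<bullet> gw + xi * b * x)"
      using T3 ew by (simp add: mult_left_mono)
    moreover have "ea * (- (M * B0)) \<le> ea * (ga \<bullet> ga + xi * b * (ga \<bullet> qa))"
      using mult_left_mono[OF T4, of ea] ea by simp
    ultimately show ?thesis unfolding gd by simp
  qed
  moreover have "L * (norm d)\<^sup>2 \<le> L * ((ew\<^sup>2 + ea\<^sup>2) * (M + B0)\<^sup>2)" using nd L0 by simp
  ultimately have "F (w', a') \<le> F (w, a) - ew * (1 - xi) * (norm gw)\<^sup>2 + ew\<^sup>2 * xi * delta * L * M\<^sup>2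
      + ea * (M * B0) + L * (ew\<^sup>2 + ea\<^sup>2) * (M + B0)\<^sup>2"
    using D by (simp add: power2_eq_square algebra_simps)
  moreover have "ea * (M * B0) \<le> ea * M * (M + B0)" using ea M0 B0_def
    by (simp add: algebra_simps mult_nonneg_nonneg)
  ultimately show ?thesis unfolding B0_def using g by simp
qed

theorem theorem1:
  shows "\<exists>\<Phi> :: real \<Rightarrow> real \<Rightarrow> real \<Rightarrow> real \<Rightarrow> real \<Rightarrow> real \<Rightarrow> real \<Rightarrow> real.
    \<forall>(F :: (real^'p) \<times> (real^'q) \<Rightarrow> real) (G :: (real^'p) \<times> (real^'q) \<Rightarrow> real)
      (gF :: (real^'p) \<times> (real^'q) \<Rightarrow> (real^'p) \<times> (real^'q)) (gG :: (real^'p) \<times> (real^'q) \<Rightarrow> (real^'p) \<times> (real^'q))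
      (L :: real) (M :: real) (delta :: real) (xi :: real) (c :: real) (C :: real) (T :: nat)
      (w :: nat \<Rightarrow> real^'p) (\<alpha> :: nat \<Rightarrow> real^'q).
      (\<forall>z. (F has_derivative (\<lambda>h. gF z \<bullet> h)) (at z)) \<and>
      (\<forall>z. (G has_derivative (\<lambda>h. gG z \<bullet> h)) (at z)) \<and>
      L > 0 \<and>
      (\<forall>z z'. norm (gF z - gF z') \<le> L * norm (z - z')) \<and>
      (\<forall>z z'. norm (gG z - gG z') \<le> L * norm (z - z')) \<and>
      (\<forall>z. \<bar>F z\<bar> \<le> M \<and> \<bar>G z\<bar> \<le> M \<and> norm (gF z) \<le> M \<and> norm (gG z) \<le> M) \<and>
      delta > 0 \<and> 0 < xi \<and> xi < 1 \<and>
      T \<ge> 1 \<and> c > 0 \<and> C > 0 \<and>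
      c / real T < 1 \<and>
      C / sqrt (real T) < min ((1 - xi) / L) 1 \<and>
      (\<forall>t\<ge>1. (w (Suc t), \<alpha> (Suc t)) =
                ebomlc_step delta xi (C / sqrt (real T)) (c / real T) gF gG (w t) (\<alpha> t))
      \<longrightarrow> Min ((\<lambda>t. (norm (fst (gF (w t, \<alpha> t))))\<^sup>2) ` {1..T})
            \<le> \<Phi> M L delta xi c C (F (w 1, \<alpha> 1)) / sqrt (real T)"
proof -
  define E :: "real \<Rightarrow> real \<Rightarrow> real \<Rightarrow> real \<Rightarrow> real \<Rightarrow> real \<Rightarrow> real" where
    "E M L delta xi c C = xi * delta * L * M\<^sup>2 * C\<^sup>2 + c * M * (M + (delta * L + 1) * M)
        + L * (C\<^sup>2 + c\<^sup>2) * (M + (delta * L + 1) * M)\<^sup>2" for M L delta xi c C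
  show ?thesis
  proof (rule exI[of _ "\<lambda>M L delta xi c C F1. (F1 + M + E M L delta xi c C) / ((1 - xi) * C)"], intro allI impI)
    fix F G :: "(real^'p) \<times> (real^'q) \<Rightarrow> real"
      and gF gG :: "(real^'p) \<times> (real^'q) \<Rightarrow> (real^'p) \<times> (real^'q)"
      and L M delta xi c C :: real and T :: nat and w :: "nat \<Rightarrow> real^'p" and \<alpha> :: "nat \<Rightarrow> real^'q"
    assume H: "(\<forall>z. (F has_derivative (\<lambda>h. gF z \<bullet> h)) (at z)) \<and>
      (\<forall>z. (G has_derivative (\<lambda>h. gG z \<bullet> h)) (at z)) \<and>
      L > 0 \<and>
      (\<forall>z z'. norm (gF z - gF z') \<le> L * norm (z - z')) \<and>
      (\<forall>z z'. norm (gG z - gG z') \<le> L * norm (z - z')) \<and>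
      (\<forall>z. \<bar>F z\<bar> \<le> M \<and> \<bar>G z\<bar> \<le> M \<and> norm (gF z) \<le> M \<and> norm (gG z) \<le> M) \<and>
      delta > 0 \<and> 0 < xi \<and> xi < 1 \<and>
      T \<ge> 1 \<and> c > 0 \<and> C > 0 \<and>
      c / real T < 1 \<and>
      C / sqrt (real T) < min ((1 - xi) / L) 1 \<and>
      (\<forall>t\<ge>1. (w (Suc t), \<alpha> (Suc t)) =
                ebomlc_step delta xi (C / sqrt (real T)) (c / real T) gF gG (w t) (\<alpha> t))"
    then have der: "\<forall>z. (F has_derivative (\<lambda>h. gF z \<bullet> h)) (at z)"
      and L0: "L > 0"
      and lipF: "\<forall>z z'. norm (gF z - gF z') \<le> L * norm (z - z')"
      and lipG: "\<forall>z z'. norm (gG z - gG z') \<le> L * norm (z - z')"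
      and bdall: "\<forall>z. \<bar>F z\<bar> \<le> M \<and> \<bar>G z\<bar> \<le> M \<and> norm (gF z) \<le> M \<and> norm (gG z) \<le> M"
      and dl: "delta > 0" and xi: "0 < xi" "xi < 1" and T1: "T \<ge> 1" and c0: "c > 0" and C0: "C > 0"
      and ca: "c / real T < 1" and Cw: "C / sqrt (real T) < min ((1 - xi) / L) 1"
      and it: "\<forall>t\<ge>1. (w (Suc t), \<alpha> (Suc t)) =
                ebomlc_step delta xi (C / sqrt (real T)) (c / real T) gF gG (w t) (\<alpha> t)"
      by auto
    define ew where "ew = C / sqrt (real T)"
    define ea where "ea = c / real T"
    define g where "g t = (norm (fst (gF (w t, \<alpha> t))))\<^sup>2" for t
    define EE where "EE = E M L delta xi c C"
    have Tp: "real T > 0" "sqrt (real T) > 0" using T1 by auto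
    have ew0: "0 < ew" "ew < 1" using Cw C0 Tp unfolding ew_def by auto
    have ea0: "0 < ea" "ea < 1" using ca c0 Tp unfolding ea_def by auto
    have bd: "\<forall>z. norm (gF z) \<le> M \<and> norm (gG z) \<le> M" using bdall by blast
    have ew2: "ew\<^sup>2 = C\<^sup>2 / real T" unfolding ew_def using Tp by (simp add: power_divide)
    have ea2: "ea\<^sup>2 \<le> c\<^sup>2 / real T"
    proof -
      have "ea\<^sup>2 = c\<^sup>2 / (real T * real T)" unfolding ea_def by (simp add: power_divide power2_eq_square)
      also have "\<dots> \<le> c\<^sup>2 / real T" using T1 Tp
        by (intro divide_left_mono) (auto simp: mult_le_cancel_left1)
      finally show ?thesis .
    qed
    have M0: "M \<ge> 0" using bd norm_ge_zero order_trans by blast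
    have onestep: "F (w (Suc t), \<alpha> (Suc t)) \<le> F (w t, \<alpha> t) - ew * (1 - xi) * g t + EE / real T"
      if "t \<ge> 1" for t
    proof -
      define B where "B = M + (delta * L + 1) * M"
      have B0: "B \<ge> 0" unfolding B_def using M0 dl L0 by simp
      have s: "F (w (Suc t), \<alpha> (Suc t)) \<le> F (w t, \<alpha> t) - ew * (1 - xi) * g t
          + ew\<^sup>2 * xi * delta * L * M\<^sup>2 + ea * M * B + L * (ew\<^sup>2 + ea\<^sup>2) * B\<^sup>2"
        using step[OF der lipF lipG bd L0 dl xi ew0 ea0(1), of "w (Suc t)" "\<alpha> (Suc t)" "w t" "\<alpha> t"]
          it that unfolding g_def B_def ew_def ea_def by simp
      have "L * (ew\<^sup>2 + ea\<^sup>2) * B\<^sup>2 \<le> L * (C\<^sup>2 / real T + c\<^sup>2 / real T) * B\<^sup>2"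
        using ea2 ew2 L0 by (intro mult_right_mono mult_left_mono) auto
      moreover have "ew\<^sup>2 * xi * delta * L * M\<^sup>2 = xi * delta * L * M\<^sup>2 * C\<^sup>2 / real T" using ew2 by simp
      moreover have "ea * M * B = c * M * B / real T" unfolding ea_def by simp
      moreover have "EE / real T = xi * delta * L * M\<^sup>2 * C\<^sup>2 / real T + c * M * B / real T
          + L * (C\<^sup>2 / real T + c\<^sup>2 / real T) * B\<^sup>2"
      proof -
        have "EE = xi * delta * L * M\<^sup>2 * C\<^sup>2 + c * M * B + L * (C\<^sup>2 + c\<^sup>2) * B\<^sup>2"
          unfolding EE_def E_def B_def by simp
        then show ?thesis using Tp(1) by (simp add: field_simps)
      qed
      ultimately show ?thesis using s by linarith
    qed
    have ind: "F (w (Suc n), \<alpha> (Suc n)) \<le> F (w 1, \<alpha> 1) - ew * (1 - xi) * (\<Sum>t=1..n. g t) + real n * EE / real T" for n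
    proof (induction n)
      case 0
      then show ?case by simp
    next
      case (Suc n)
      have "F (w (Suc (Suc n)), \<alpha> (Suc (Suc n))) \<le> F (w (Suc n), \<alpha> (Suc n)) - ew * (1 - xi) * g (Suc n) + EE / real T"
        using onestep[of "Suc n"] by simp
      also have "\<dots> \<le> F (w 1, \<alpha> 1) - ew * (1 - xi) * (\<Sum>t=1..Suc n. g t) + real (Suc n) * EE / real T"
        using Suc.IH by (simp add: algebra_simps add_divide_distrib)
      finally show ?case .
    qed
    have "- M \<le> F (w (Suc T), \<alpha> (Suc T))" using bdall by (metis abs_le_D2 minus_le_iff)
    then have S: "ew * (1 - xi) * (\<Sum>t=1..T. g t) \<le> F (w 1, \<alpha> 1) + M + EE"
      using ind[of T] Tp by simp
    define m where "m = Min (g ` {1..T})"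
    have "real T * m \<le> (\<Sum>t=1..T. g t)"
    proof -
      have "(\<Sum>t=1..T. m) \<le> (\<Sum>t=1..T. g t)" unfolding m_def by (intro sum_mono Min_le) auto
      then show ?thesis by simp
    qed
    then have "ew * (1 - xi) * (real T * m) \<le> F (w 1, \<alpha> 1) + M + EE"
      using S ew0 xi by (smt (verit) mult_left_mono mult_pos_pos)
    moreover have "ew * (1 - xi) * (real T * m) = ((1 - xi) * C) * sqrt (real T) * m"
    proof -
      have "ew * real T = C * sqrt (real T)" unfolding ew_def using Tp
        by (simp add: field_simps)
      then show ?thesis by (simp add: algebra_simps) (metis mult.assoc mult.commute)
    qed
    ultimately have "((1 - xi) * C) * sqrt (real T) * m \<le> F (w 1, \<alpha> 1) + M + EE" by simp
    moreover have "(1 - xi) * C * sqrt (real T) > 0" using xi C0 Tp by simp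
    ultimately have "m \<le> (F (w 1, \<alpha> 1) + M + EE) / ((1 - xi) * C * sqrt (real T))"
      by (simp add: field_simps mult.commute)
    then show "Min ((\<lambda>t. (norm (fst (gF (w t, \<alpha> t))))\<^sup>2) ` {1..T})
            \<le> (F (w 1, \<alpha> 1) + M + E M L delta xi c C) / ((1 - xi) * C) / sqrt (real T)"
      unfolding m_def g_def EE_def by simp
  qed
qed
end
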